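(* Let $(X,T)$ be a Cantor minimal system and let $\Theta:E(X,T)\to K^0(X,T)$ be the injective homomorphism given by $\Theta(\theta)=\lfloor\theta\rfloor[1_X]+[1_{U_{\{\theta\}}}]$, where for $t\in[0,1)\cap E(X,T)$, $U_t$ is a clopen set with $1_{U_t}-t\mathbf 1$ a real coboundary. Then the quotient group $K^0(X,T)/\Theta(E(X,T))$ is torsion-free.
   Context: A Cantor minimal system is a homeomorphism $T$ of a Cantor set $X$ with all orbits dense. $E(X,T)=\{\theta\in\mathbb R:\exp(2\pi i\theta)\text{ is a continuous eigenvalue of } T\}$, where $\lambda$ is a continuous eigenvalue if $f\circ T=\lambda f$ for some continuous $f:X\to\mathbb S^1$. A real coboundary is $F-F\circ T$ with $F\in C(X,\mathbb R)$; such clopen sets $U_t$ exist ($U_0=\emptyset$), and $\Theta$ does not depend on their choice. $\{\theta\}=\theta-\lfloor\theta\rfloor$. $K^0(X,T)=C(X,\mathbb Z)/\{f-f\circ T:f\in C(X,\mathbb Z)\}$, $[f]$ the class of $f$. *)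

theory Defs
  imports "HOL-Analysis.Analysis"
begin

definition cantor_set :: "'a::metric_space set \<Rightarrow> bool" where
  "cantor_set X \<longleftrightarrow> X \<noteq> {} \<and> compact X \<and> (\<forall>x\<in>X. x islimpt X) \<and>
     (\<forall>C. C \<subseteq> X \<longrightarrow> connected C \<longrightarrow> (\<forall>x\<in>C. \<forall>y\<in>C. x = y))"

text \<open>Full orbit of x under the homeomorphism T (with inverse S).\<close>
definition full_orbit :: "('a \<Rightarrow> 'a) \<Rightarrow> ('a \<Rightarrow> 'a) \<Rightarrow> 'a \<Rightarrow> 'a set" where
  "full_orbit T S x = {(T ^^ n) x | n. True} \<union> {(S ^^ n) x | n. True}"

definition cantor_minimal_system :: "'a::metric_space set \<Rightarrow> ('a \<Rightarrow> 'a) \<Rightarrow> bool" where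
  "cantor_minimal_system X T \<longleftrightarrow> cantor_set X \<and>
     (\<exists>S. homeomorphism X X T S \<and> (\<forall>x\<in>X. X \<subseteq> closure (full_orbit T S x)))"

definition continuous_eigenvalue :: "'a::metric_space set \<Rightarrow> ('a \<Rightarrow> 'a) \<Rightarrow> complex \<Rightarrow> bool" where
  "continuous_eigenvalue X T lam \<longleftrightarrow>
     (\<exists>f :: 'a \<Rightarrow> complex. continuous_on X f \<and> f ` X \<subseteq> sphere 0 1 \<and>
        (\<forall>x\<in>X. f (T x) = lam * f x))"

definition eigen_group :: "'a::metric_space set \<Rightarrow> ('a \<Rightarrow> 'a) \<Rightarrow> real set" where
  "eigen_group X T = {\<theta>. continuous_eigenvalue X T (exp (2 * of_real pi * \<i> * of_real \<theta>))}"

definition int_cont :: "'a::metric_space set \<Rightarrow> ('a \<Rightarrow> int) \<Rightarrow> bool" where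
  "int_cont X f \<longleftrightarrow> continuous_on X (\<lambda>x. real_of_int (f x))"

definition int_coboundary :: "'a::metric_space set \<Rightarrow> ('a \<Rightarrow> 'a) \<Rightarrow> ('a \<Rightarrow> int) \<Rightarrow> bool" where
  "int_coboundary X T g \<longleftrightarrow> (\<exists>f. int_cont X f \<and> (\<forall>x\<in>X. g x = f x - f (T x)))"

definition real_coboundary :: "'a::metric_space set \<Rightarrow> ('a \<Rightarrow> 'a) \<Rightarrow> ('a \<Rightarrow> real) \<Rightarrow> bool" where
  "real_coboundary X T g \<longleftrightarrow> (\<exists>F. continuous_on X F \<and> (\<forall>x\<in>X. g x = F x - F (T x)))"

text \<open>Equality of classes in K^0(X,T): [f] = [g].\<close>
definition K0_eq :: "'a::metric_space set \<Rightarrow> ('a \<Rightarrow> 'a) \<Rightarrow> ('a \<Rightarrow> int) \<Rightarrow> ('a \<Rightarrow> int) \<Rightarrow> bool" where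
  "K0_eq X T f g \<longleftrightarrow> int_coboundary X T (\<lambda>x. f x - g x)"

definition clopen_in :: "'a::metric_space set \<Rightarrow> 'a set \<Rightarrow> bool" where
  "clopen_in X U \<longleftrightarrow> openin (top_of_set X) U \<and> closedin (top_of_set X) U"

text \<open>The class [f] lies in Theta(E(X,T)): [f] = floor(theta)[1_X] + [1_U] for some
  theta in E(X,T) and a clopen U with 1_U - frac(theta) 1 a real coboundary
  (Theta does not depend on the choice of U).\<close>
definition in_Theta_image :: "'a::metric_space set \<Rightarrow> ('a \<Rightarrow> 'a) \<Rightarrow> ('a \<Rightarrow> int) \<Rightarrow> bool" where
  "in_Theta_image X T f \<longleftrightarrow>
     (\<exists>\<theta>\<in>eigen_group X T. \<exists>U. clopen_in X U \<and>
        real_coboundary X T (\<lambda>x. indicator U x - frac \<theta>) \<and>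
        K0_eq X T f (\<lambda>x. \<lfloor>\<theta>\<rfloor> + indicator U x))"

end

theory Submission
  imports Defs
begin

lemma clopen_small:
  fixes X :: "'a::metric_space set"
  assumes cs: "cantor_set X" and x0: "x0 \<in> X" and W: "openin (top_of_set X) W" and "x0 \<in> W"
  obtains A where "clopen_in X A" "x0 \<in> A" "A \<subseteq> W"
proof -
  have cX: "compact X" using cs by (simp add: cantor_set_def)
  let ?X = "top_of_set X"
  have comp: "compactin ?X {x0}" using x0 by simp
  have cc: "connected_component_of_set ?X x0 = {x0}"
  proof -
    have "connectedin ?X (connected_component_of_set ?X x0)"
      by (rule connectedin_connected_component_of)
    then have "connected (connected_component_of_set ?X x0)" and sub: "connected_component_of_set ?X x0 \<subseteq> X"
      by (auto simp: connectedin_subtopology)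
    moreover have "x0 \<in> connected_component_of_set ?X x0" using x0
      by (simp add: connected_component_of_refl)
    ultimately show ?thesis using cs unfolding cantor_set_def by blast
  qed
  have "{x0} \<in> connected_components_of ?X"
    using connected_component_in_connected_components_of[of ?X x0] x0 cc by simp
  moreover have "locally_compact_space ?X"
    by (rule compact_imp_locally_compact_space) (simp add: cX compact_space_subtopology)
  ultimately obtain U V where "openin ?X U" "openin ?X V" "disjnt U V" "U \<union> V = topspace ?X" "{x0} \<subseteq> U" "U \<subseteq> W"
    using wilder_locally_compact_component_thm[of ?X "{x0}" W] comp W \<open>x0 \<in> W\<close>
    by (auto simp: Hausdorff_space_subtopology)
  moreover have "closedin ?X U"
    using calculation by (metis Diff_cancel Int_Diff_Un Un_Diff disjnt_def inf_commute openin_closedin_eq sup_commute)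
  ultimately show ?thesis using that unfolding clopen_in_def by auto
qed

lemma iter_in:
  assumes "\<And>x. x \<in> X \<Longrightarrow> S x \<in> X" "x \<in> X"
  shows "(S^^m) x \<in> X"
  using assms by (induction m) auto

lemma iter_cont:
  assumes "\<And>x. x \<in> X \<Longrightarrow> S x \<in> X" "continuous_on X S"
  shows "continuous_on X (S^^m)"
proof (induction m)
  case 0 then show ?case by (simp add: continuous_on_id')
next
  case (Suc m)
  have "continuous_on X (S \<circ> (S^^m))"
    by (rule continuous_on_compose[OF Suc]) (rule continuous_on_subset[OF assms(2)], rule image_subsetI, rule iter_in[OF assms(1)])
  then show ?case by simp
qed

lemma iter_inv:
  assumes "\<And>x. x \<in> X \<Longrightarrow> S x \<in> X" "\<And>x. x \<in> X \<Longrightarrow> T (S x) = x" "x \<in> X"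
  shows "(T^^m) ((S^^m) x) = x"
proof (induction m)
  case 0 then show ?case by simp
next
  case (Suc m)
  have "(T^^Suc m) ((S^^Suc m) x) = (T^^m) (T ((S^^Suc m) x))"
    by (simp only: funpow_Suc_right o_def)
  also have "\<dots> = (T^^m) (T (S ((S^^m) x)))" by simp
  also have "\<dots> = x" using assms(2)[OF iter_in[OF assms(1) assms(3)]] Suc by simp
  finally show ?case .
qed

lemma core:
  fixes X :: "'a::metric_space set"
  assumes cs: "cantor_set X" and hom: "homeomorphism X X T S"
    and mini: "\<forall>x\<in>X. X \<subseteq> closure (full_orbit T S x)"
    and g: "int_cont X g" and F: "continuous_on X F" and t: "0 \<le> t" "t < 1"
    and eq: "\<forall>x\<in>X. real_of_int (g x) - t = F x - F (T x)"
  obtains U where "clopen_in X U" "real_coboundary X T (\<lambda>x. indicator U x - t)"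
     "int_coboundary X T (\<lambda>x. g x - indicator U x)"
proof -
  have TX: "\<And>x. x \<in> X \<Longrightarrow> T x \<in> X" and SX: "\<And>x. x \<in> X \<Longrightarrow> S x \<in> X"
    and ST: "\<And>x. x \<in> X \<Longrightarrow> S (T x) = x" and TS: "\<And>x. x \<in> X \<Longrightarrow> T (S x) = x"
    and cT: "continuous_on X T" and cS: "continuous_on X S"
    using hom unfolding homeomorphism_def by auto
  have cX: "compact X" and ne: "X \<noteq> {}" using cs by (auto simp: cantor_set_def)
  then obtain x0 where x0: "x0 \<in> X" by blast
  define \<epsilon> where "\<epsilon> = (1 - t) / 4"
  have \<epsilon>4: "4 * \<epsilon> = 1 - t" by (simp add: \<epsilon>_def)
  have \<epsilon>: "\<epsilon> > 0" using t \<epsilon>4 by linarith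
  define W where "W = X \<inter> F -` ball (F x0) \<epsilon>"
  have "openin (top_of_set X) W" unfolding W_def
    by (rule continuous_openin_preimage_gen[OF F]) simp
  moreover have "x0 \<in> W" using x0 \<epsilon> by (simp add: W_def)
  ultimately obtain A where A: "clopen_in X A" "x0 \<in> A" "A \<subseteq> W"
    using clopen_small[OF cs x0] by blast
  have AX: "A \<subseteq> X" using A W_def by auto
  have Snx: "\<And>m x. x \<in> X \<Longrightarrow> (S^^m) x \<in> X" by (rule iter_in[OF SX])
  have Tnx: "\<And>m x. x \<in> X \<Longrightarrow> (T^^m) x \<in> X" by (rule iter_in[OF TX])
  have cSn: "\<And>m. continuous_on X (S^^m)" by (rule iter_cont[OF SX cS])
  have cTn: "\<And>m. continuous_on X (T^^m)" by (rule iter_cont[OF TX cT])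
  have preo: "openin (top_of_set X) (X \<inter> f -` A)" if "continuous_on X f" "\<And>x. x\<in>X \<Longrightarrow> f x \<in> X" for f
    using continuous_openin_preimage[of X f X A] that A(1) unfolding clopen_in_def by auto
  have prec: "closedin (top_of_set X) (X \<inter> f -` A)" if "continuous_on X f" "\<And>x. x\<in>X \<Longrightarrow> f x \<in> X" for f
    using continuous_on_closed_gen[of f X X] that A(1) unfolding clopen_in_def by auto
  \<comment> \<open>every backward orbit hits A\<close>
  have "\<forall>m. \<exists>B. open B \<and> (X \<inter> (T^^m) -` A) \<union> (X \<inter> (S^^m) -` A) = X \<inter> B"
  proof
    fix m
    have "openin (top_of_set X) ((X \<inter> (T^^m) -` A) \<union> (X \<inter> (S^^m) -` A))"
      by (intro openin_Un preo[OF cTn Tnx] preo[OF cSn Snx])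
    then show "\<exists>B. open B \<and> (X \<inter> (T^^m) -` A) \<union> (X \<inter> (S^^m) -` A) = X \<inter> B"
      by (auto simp: openin_open)
  qed
  from choice[OF this] obtain Cv where Cv: "\<And>m. open (Cv m)" "\<And>m. (X \<inter> (T^^m) -` A) \<union> (X \<inter> (S^^m) -` A) = X \<inter> Cv m"
    by blast
  have cov: "X \<subseteq> (\<Union>m\<in>UNIV. Cv m)"
  proof
    fix x assume x: "x \<in> X"
    obtain B where O: "open B" "A = X \<inter> B" using A(1) unfolding clopen_in_def by (auto simp: openin_open)
    have "x0 \<in> closure (full_orbit T S x)" using mini x x0 by blast
    then have "B \<inter> full_orbit T S x \<noteq> {}"
      using open_Int_closure_eq_empty[OF O(1)] O A(2) by blast
    then obtain y m where y: "y \<in> B" "y = (T^^m) x \<or> y = (S^^m) x"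
      unfolding full_orbit_def by blast
    have "y \<in> X" using y(2) Tnx[OF x, of m] Snx[OF x, of m] by auto
    then have "y \<in> A" using O(2) y(1) by auto
    then have "x \<in> X \<inter> Cv m" using Cv(2)[of m] y(2) x by auto
    then show "x \<in> (\<Union>m\<in>UNIV. Cv m)" by blast
  qed
  then obtain J where J: "finite J" "X \<subseteq> (\<Union>m\<in>J. Cv m)"
    using compactE_image[OF cX, of UNIV Cv, OF Cv(1) cov] by auto
  then obtain N where N: "J \<subseteq> {..<N}" using finite_nat_bounded[OF J(1)] by blast
  have hit: "\<exists>j. (S^^j) x \<in> A" if x: "x \<in> X" for x
  proof -
    define z where "z = (S^^N) x"
    have z: "z \<in> X" using Snx x z_def by blast
    then obtain m where m: "m < N" "z \<in> Cv m" using J N by blast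
    then have "(T^^m) z \<in> A \<or> (S^^m) z \<in> A" using Cv(2)[of m] z by blast
    then show ?thesis
    proof
      assume a: "(T^^m) z \<in> A"
      have "z = (S^^m) ((S^^(N-m)) x)" unfolding z_def
        using m funpow_add[of m "N-m" S] by (simp add: o_def)
      then have "(T^^m) z = (S^^(N-m)) x" using iter_inv[OF SX TS Snx[OF x]] by simp
      then show ?thesis using a by auto
    next
      assume "(S^^m) z \<in> A"
      then have "(S^^(m+N)) x \<in> A" unfolding z_def by (simp add: funpow_add)
      then show ?thesis by blast
    qed
  qed
  define jx where "jx x = (LEAST j. (S^^j) x \<in> A)" for x
  have jxA: "(S^^(jx x)) x \<in> A" if "x \<in> X" for x
    unfolding jx_def using hit[OF that] by (rule LeastI_ex)
  have jxmin: "(S^^i) x \<notin> A" if "x \<in> X" "i < jx x" for x i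
    using not_less_Least[of i "\<lambda>j. (S^^j) x \<in> A"] that unfolding jx_def by blast
  define \<psi> where "\<psi> x = F ((S^^(jx x)) x) + frac (real (jx x) * t)" for x
  have intrel: "F x - F ((S^^j) x) - real j * t \<in> \<int>" if x: "x \<in> X" for x j
  proof (induction j)
    case 0 then show ?case by simp
  next
    case (Suc j)
    define w where "w = (S^^j) x"
    have w: "w \<in> X" using Snx[OF x] w_def by simp
    have e: "real_of_int (g (S w)) - t = F (S w) - F w"
      using eq SX[OF w] TS[OF w] by auto
    have "F x - F ((S^^Suc j) x) - real (Suc j) * t
        = (F x - F ((S^^j) x) - real j * t) + (- real_of_int (g (S w)))"
      using e by (simp add: w_def algebra_simps)
    also have "\<dots> \<in> \<int>" using Suc by (intro Ints_add Ints_minus) auto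
    finally show ?case .
  qed
  have kint: "F x - \<psi> x \<in> \<int>" if x: "x \<in> X" for x
  proof -
    have "F x - \<psi> x = (F x - F ((S^^(jx x)) x) - real (jx x) * t) + of_int \<lfloor>real (jx x) * t\<rfloor>"
      unfolding \<psi>_def frac_def by simp
    also have "\<dots> \<in> \<int>" using intrel[OF x] by (intro Ints_add) auto
    finally show ?thesis .
  qed
  define Q where "Q m = {w \<in> X. \<forall>i<m. (S^^i) w \<notin> A}" for m
  have Qo: "openin (top_of_set X) (Q m)" for m
  proof (induction m)
    case 0 then show ?case by (simp add: Q_def)
  next
    case (Suc m)
    have "Q (Suc m) = Q m - (X \<inter> (S^^m) -` A)"
      unfolding Q_def by (auto simp: less_Suc_eq)
    then show ?case using Suc prec[OF cSn Snx] by (simp add: openin_diff)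
  qed
  define P where "P m = (X \<inter> (S^^m) -` A) \<inter> Q m" for m
  have Po: "openin (top_of_set X) (P m)" for m
    unfolding P_def by (intro openin_Int preo[OF cSn Snx] Qo)
  have Pjx: "jx w = m" if "w \<in> P m" for w m
  proof -
    have "(S^^m) w \<in> A" "\<And>i. i < m \<Longrightarrow> (S^^i) w \<notin> A" using that by (auto simp: P_def Q_def)
    then show ?thesis unfolding jx_def
      by (intro Least_equality) (auto simp: not_less[symmetric])
  qed
  have inP: "x \<in> P (jx x)" if "x \<in> X" for x
    using jxA[OF that] jxmin[OF that] that by (auto simp: P_def Q_def)
  have cpsi: "continuous_on X \<psi>"
  proof -
    have "continuous_map (top_of_set X) euclidean \<psi>"
    proof (rule pasting_lemma[where I=UNIV and T=P and f="\<lambda>m w. F ((S^^m) w) + frac (real m * t)"])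
      fix m :: nat
      have "continuous_on X (\<lambda>w. F ((S^^m) w) + frac (real m * t))"
        by (intro continuous_intros continuous_on_compose2[OF F cSn]) (auto intro: Snx)
      then have "continuous_on (P m) (\<lambda>w. F ((S^^m) w) + frac (real m * t))"
        by (rule continuous_on_subset) (auto simp: P_def)
      then show "continuous_map (subtopology (top_of_set X) (P m)) euclidean (\<lambda>w. F ((S^^m) w) + frac (real m * t))"
        using openin_subset[OF Po[of m]] by (simp add: subtopology_subtopology Int_absorb1)
    next
      fix i j x assume "x \<in> topspace (top_of_set X) \<inter> P i \<inter> P j"
      then have "x \<in> P i" "x \<in> P j" by auto
      then have "i = j" using Pjx[of x i] Pjx[of x j] by simp
      then show "F ((S^^i) x) + frac (real i * t) = F ((S^^j) x) + frac (real j * t)" by simp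
    next
      fix x assume "x \<in> topspace (top_of_set X)"
      then have x: "x \<in> X" by simp
      show "\<exists>j. j \<in> UNIV \<and> x \<in> P j \<and> \<psi> x = F ((S^^j) x) + frac (real j * t)"
        using inP[OF x] by (auto simp: \<psi>_def)
    qed (use Po in auto)
    then show ?thesis by simp
  qed
  define K where "K x = \<lfloor>F x - \<psi> x\<rfloor>" for x
  have Kr: "real_of_int (K x) = F x - \<psi> x" if "x \<in> X" for x
    using kint[OF that] unfolding K_def by (metis Ints_cases floor_of_int)
  have Kc: "int_cont X K" unfolding int_cont_def
    using continuous_on_diff[OF F cpsi] by (rule continuous_on_cong[THEN iffD1, rotated 2]) (auto simp: Kr)
  define D where "D x = \<psi> x - \<psi> (T x) + t" for x
  have DK: "D x = real_of_int (g x - K x + K (T x))" if x: "x \<in> X" for x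
    using Kr[OF x] Kr[OF TX[OF x]] eq x unfolding D_def by auto
  have Dint: "D x \<in> \<int>" if "x \<in> X" for x using DK[OF that] by simp
  have Dbd: "-1 < D x \<and> D x < 2" if x: "x \<in> X" for x
  proof (cases "T x \<in> A")
    case True
    have j0: "jx (T x) = 0" unfolding jx_def using True by simp
    define y where "y = (S^^(jx x)) x"
    have "y \<in> W" "T x \<in> W" using jxA[OF x] True A(3) y_def by auto
    then have "\<bar>F y - F x0\<bar> < \<epsilon>" "\<bar>F (T x) - F x0\<bar> < \<epsilon>"
      unfolding W_def by (auto simp: dist_real_def abs_minus_commute)
    moreover have "D x = F y + frac (real (jx x) * t) - F (T x) + t"
      unfolding D_def \<psi>_def y_def j0 by simp
    moreover have "0 \<le> frac (real (jx x) * t)" "frac (real (jx x) * t) < 1"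
      by (auto simp: frac_lt_1)
    ultimately show ?thesis using t \<epsilon>4 unfolding abs_less_iff
      apply (elim conjE, intro conjI) by linarith+
  next
    case False
    have s1: "(S^^(Suc m)) (T x) = (S^^m) x" for m
      by (simp only: funpow_Suc_right o_def ST[OF x])
    obtain n where n: "(S^^n) (T x) \<in> A" using hit[OF TX[OF x]] by blast
    have "jx (T x) = Suc (LEAST m. (S^^(Suc m)) (T x) \<in> A)"
      unfolding jx_def by (rule Least_Suc[where P="\<lambda>j. (S^^j) (T x) \<in> A", OF n]) (use False in simp)
    then have jT: "jx (T x) = Suc (jx x)" unfolding jx_def s1 .
    have "D x = frac (real (jx x) * t) - frac (real (Suc (jx x)) * t) + t"
      unfolding D_def \<psi>_def jT s1 by simp
    moreover have "0 \<le> frac (real (jx x) * t)" "frac (real (jx x) * t) < 1"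
      "0 \<le> frac (real (Suc (jx x)) * t)" "frac (real (Suc (jx x)) * t) < 1"
      by (auto simp: frac_lt_1)
    ultimately show ?thesis using t apply (intro conjI) by linarith+
  qed
  have D01: "D x = 0 \<or> D x = 1" if x: "x \<in> X" for x
  proof -
    obtain z where z: "D x = of_int z" using Dint[OF x] by (auto elim: Ints_cases)
    then have "-1 < z" "z < 2" using Dbd[OF x] by auto
    then have "z = 0 \<or> z = 1" by auto
    then show ?thesis using z by auto
  qed
  have cD: "continuous_on X D" unfolding D_def
    by (intro continuous_intros cpsi continuous_on_compose2[OF cpsi cT]) (auto intro: TX)
  define U where "U = {x \<in> X. D x = 1}"
  have U1: "U = X \<inter> D -` {1/2<..}" using D01 by (force simp: U_def)
  have U2: "U = X \<inter> D -` {1/2..}" using D01 by (force simp: U_def)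
  have "clopen_in X U" unfolding clopen_in_def
    using continuous_openin_preimage_gen[OF cD, of "{1/2<..}"] continuous_closedin_preimage[OF cD, of "{1/2..}"]
    by (simp add: U1[symmetric] U2[symmetric])
  moreover have ind: "indicator U x = D x" if "x \<in> X" for x
    using D01[OF that] that by (auto simp: U_def indicator_def)
  have "real_coboundary X T (\<lambda>x. indicator U x - t)"
    unfolding real_coboundary_def
    by (rule exI[of _ \<psi>]) (auto simp: ind D_def cpsi)
  moreover have "int_coboundary X T (\<lambda>x. g x - indicator U x)"
    unfolding int_coboundary_def
  proof (rule exI[of _ K], intro conjI Kc ballI)
    fix x assume x: "x \<in> X"
    have "real_of_int (g x - indicator U x) = real_of_int (K x - K (T x))"
      using ind[OF x] DK[OF x] by (simp add: indicator_def split: if_splits)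
    then show "g x - indicator U x = K x - K (T x)" by (simp only: of_int_eq_iff)
  qed
  ultimately show thesis using that by blast
qed

theorem mainTheorem6:
  fixes X :: "'a::metric_space set" and T :: "'a \<Rightarrow> 'a"
  assumes "cantor_minimal_system X T"
  shows "\<forall>f n. int_cont X f \<and> n > (0::int) \<and> in_Theta_image X T (\<lambda>x. n * f x)
            \<longrightarrow> in_Theta_image X T f"
proof (intro allI impI, elim conjE)
  fix f and n :: int
  assume fc: "int_cont X f" and n: "n > 0" and th: "in_Theta_image X T (\<lambda>x. n * f x)"
  from assms obtain S where cs: "cantor_set X" and hom: "homeomorphism X X T S"
    and mini: "\<forall>x\<in>X. X \<subseteq> closure (full_orbit T S x)"
    unfolding cantor_minimal_system_def by blast
  have TX: "\<And>x. x \<in> X \<Longrightarrow> T x \<in> X" and cT: "continuous_on X T"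
    using hom unfolding homeomorphism_def by auto
  from th obtain \<theta> U k G where U: "clopen_in X U"
    and G: "continuous_on X G" "\<forall>x\<in>X. indicator U x - frac (\<theta>::real) = G x - G (T x)"
    and k: "int_cont X k" "\<forall>x\<in>X. n * f x - (\<lfloor>\<theta>\<rfloor> + indicator U x) = k x - k (T x)"
    unfolding in_Theta_image_def real_coboundary_def K0_eq_def int_coboundary_def by blast
  define \<theta>' where "\<theta>' = \<theta> / real_of_int n"
  define F0 where "F0 x = (real_of_int (k x) + G x) / real_of_int n" for x
  have F0c: "continuous_on X F0" unfolding F0_def
    using k(1) G(1) n unfolding int_cont_def
    by (intro continuous_on_divide continuous_on_add continuous_on_const) auto
  have F0e: "real_of_int (f x) - \<theta>' = F0 x - F0 (T x)" if x: "x \<in> X" for x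
  proof -
    have e1: "real_of_int (n * f x) - (real_of_int \<lfloor>\<theta>\<rfloor> + indicator U x) = real_of_int (k x) - real_of_int (k (T x))"
    proof -
      have e0: "n * f x - (\<lfloor>\<theta>\<rfloor> + indicator U x) = k x - k (T x)" using k(2) x by blast
      then have "real_of_int (n * f x - (\<lfloor>\<theta>\<rfloor> + indicator U x)) = real_of_int (k x - k (T x))" by simp
      then show ?thesis by (cases "x \<in> U") (simp_all add: indicator_def)
    qed
    have e2: "indicator U x - frac \<theta> = G x - G (T x)" using G(2) x by blast
    have num: "(real_of_int (k x) - real_of_int (k (T x))) + (G x - G (T x)) = real_of_int (n * f x) - \<theta>"
      using e1 e2 unfolding frac_def by linarith
    have "F0 x - F0 (T x) = ((real_of_int (k x) - real_of_int (k (T x))) + (G x - G (T x))) / real_of_int n"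
      unfolding F0_def by (simp add: diff_divide_distrib add_divide_distrib)
    also have "\<dots> = (real_of_int (n * f x) - \<theta>) / real_of_int n" by (simp only: num)
    also have "\<dots> = real_of_int (f x) - \<theta>'" using n unfolding \<theta>'_def by (simp add: field_simps)
    finally show ?thesis by simp
  qed
  have eig: "\<theta>' \<in> eigen_group X T"
    unfolding eigen_group_def continuous_eigenvalue_def mem_Collect_eq
  proof (intro exI conjI ballI)
    let ?h = "\<lambda>x. exp (2 * of_real pi * \<i> * of_real (F0 x))"
    show "continuous_on X ?h" by (intro continuous_intros F0c)
    show "?h ` X \<subseteq> sphere 0 1" by (auto simp: norm_exp_i_times)
    fix x assume x: "x \<in> X"
    have "F0 (T x) = F0 x + \<theta>' - real_of_int (f x)" using F0e[OF x] by simp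
    then have hc: "complex_of_real (F0 (T x)) = of_real (F0 x) + of_real \<theta>' - of_int (f x)" by simp
    have "?h (T x) = exp (2 * of_real pi * \<i> * of_real \<theta>' + 2 * of_real pi * \<i> * of_real (F0 x) + (- (2 * of_real pi * \<i> * of_int (f x))))"
      by (simp add: hc algebra_simps)
    also have "\<dots> = exp (2 * of_real pi * \<i> * of_real \<theta>') * ?h x * exp (- (2 * of_real pi * \<i> * of_int (f x)))"
      by (simp only: exp_add)
    also have "exp (- (2 * of_real pi * \<i> * of_int (f x))) = 1"
    proof -
      have e: "exp (of_real (2 * real_of_int (f x) * pi) * \<i>) = 1"
        using exp_integer_2pi[of "of_real (real_of_int (f x))"] by simp
      have a: "2 * of_real pi * \<i> * of_int (f x) = of_real (2 * real_of_int (f x) * pi) * (\<i>::complex)"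
        by simp
      show ?thesis unfolding exp_minus a e by simp
    qed
    finally show "?h (T x) = exp (2 * of_real pi * \<i> * of_real \<theta>') * ?h x" by simp
  qed
  define g where "g x = f x - \<lfloor>\<theta>'\<rfloor>" for x
  have gc: "int_cont X g" using fc unfolding int_cont_def g_def of_int_diff
    by (intro continuous_on_diff continuous_on_const)
  have ge: "\<forall>x\<in>X. real_of_int (g x) - frac \<theta>' = F0 x - F0 (T x)"
    using F0e unfolding g_def frac_def by auto
  obtain V where V: "clopen_in X V" "real_coboundary X T (\<lambda>x. indicator V x - frac \<theta>')"
    "int_coboundary X T (\<lambda>x. g x - indicator V x)"
    using core[OF cs hom mini gc F0c frac_ge_0 frac_lt_1 ge] by blast
  have "K0_eq X T f (\<lambda>x. \<lfloor>\<theta>'\<rfloor> + indicator V x)"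
    using V(3) unfolding K0_eq_def g_def by (simp add: algebra_simps)
  then show "in_Theta_image X T f"
    unfolding in_Theta_image_def using eig V(1,2) by blast
qed

end
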